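(* Let $r\ge 1$ and $K\ge 1$ be integers, $\beta_1,\beta_2>0$, $\alpha_2>0$ and $\theta_1,\theta_2>0$. Let $\zeta=(1,0,0)$, $\eta=(0,0,1)$, $v'=(0,1,0)$, and for $i=1,\dots,r$ let $k_i=2^{i-1}K\zeta$ and $k_i'=k_i+\eta$. Define \[ E_1(x,t)=-\frac{r^{-\beta_1-\beta_2}}{2}\sum_{\substack{i,j=1\\ i\ne j}}^r|k_i|^{\theta_1}|k_j'|^{\theta_2}e^{-(|k_i|^{2\alpha_2}+|k_j'|^{2\alpha_2})t}\sin((k_j'-k_i)\cdot x)\,v', \] \[ E_2(x,t)=-\frac{r^{-\beta_1-\beta_2}}{2}\sum_{i=1}^r\sum_{j=1}^r|k_i|^{\theta_1}|k_j'|^{\theta_2}e^{-(|k_i|^{2\alpha_2}+|k_j'|^{2\alpha_2})t}\sin((k_j'+k_i)\cdot x)\,v', \] and for $m=1,2$ \[ b_{1m}(x,t)=\int_0^t e^{-(t-\tau)(-\Delta)^{\alpha_2}}E_m(x,\tau)\,d\tau . \] Then for all $t>0$, \[ \|b_{11}(\cdot,t)\|_{L^\infty}+\|b_{12}(\cdot,t)\|_{L^\infty}\lesssim r^{-\beta_1-\beta_2}\,t^{1-\frac{\theta_1+\theta_2}{2\alpha_2}}, \] with implicit constant independent of $r$, $K$ and $t$.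
   Context: $e^{-t(-\Delta)^\alpha}$ is the fractional heat semigroup (Fourier multiplier $e^{-t|\xi|^{2\alpha}}$); in particular $e^{-t(-\Delta)^\alpha}\big(w\sin(k\cdot x)\big)=e^{-|k|^{2\alpha}t}w\sin(k\cdot x)$. *)

theory Defs
  imports "HOL-Analysis.Analysis"
begin

definition zeta :: "real^3" where "zeta = vector [1, 0, 0]"
definition eta :: "real^3" where "eta = vector [0, 0, 1]"
definition vprime :: "real^3" where "vprime = vector [0, 1, 0]"

definition kvec :: "nat \<Rightarrow> nat \<Rightarrow> real^3" where
  "kvec K i = (2 ^ (i - 1) * real K) *\<^sub>R zeta"
definition kvec' :: "nat \<Rightarrow> nat \<Rightarrow> real^3" where
  "kvec' K i = kvec K i + eta"

definition sine_series :: "'p set \<Rightarrow> ('p \<Rightarrow> real) \<Rightarrow> ('p \<Rightarrow> real^3) \<Rightarrow> real^3 \<Rightarrow> real" where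
  "sine_series I c q x = (\<Sum>p\<in>I. c p * sin (q p \<bullet> x))"

text \<open>Fractional heat semigroup e^{-s(-Delta)^alpha} applied to the sine series
  with coefficients c and frequencies q: Fourier multiplier e^{-s|xi|^(2 alpha)},
  i.e. each mode sin(q.x) is multiplied by e^{-|q|^(2 alpha) s}.\<close>
definition frac_heat_sine ::
  "real \<Rightarrow> real \<Rightarrow> 'p set \<Rightarrow> ('p \<Rightarrow> real) \<Rightarrow> ('p \<Rightarrow> real^3) \<Rightarrow> real^3 \<Rightarrow> real" where
  "frac_heat_sine \<alpha> s I c q x =
     sine_series I (\<lambda>p. exp (- (norm (q p) powr (2 * \<alpha>)) * s) * c p) q x"

definition Ecoef :: "real \<Rightarrow> real \<Rightarrow> real \<Rightarrow> real \<Rightarrow> real \<Rightarrow> nat \<Rightarrow> nat \<Rightarrow> real \<Rightarrow> nat \<times> nat \<Rightarrow> real" where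
  "Ecoef \<beta>1 \<beta>2 \<alpha>2 \<theta>1 \<theta>2 r K \<tau> ij =
     (case ij of (i, j) \<Rightarrow>
       - (real r powr (- \<beta>1 - \<beta>2) / 2) * norm (kvec K i) powr \<theta>1 * norm (kvec' K j) powr \<theta>2
       * exp (- (norm (kvec K i) powr (2 * \<alpha>2) + norm (kvec' K j) powr (2 * \<alpha>2)) * \<tau>))"

definition I1 :: "nat \<Rightarrow> (nat \<times> nat) set" where
  "I1 r = {(i, j). i \<in> {1..r} \<and> j \<in> {1..r} \<and> i \<noteq> j}"
definition I2 :: "nat \<Rightarrow> (nat \<times> nat) set" where
  "I2 r = {1..r} \<times> {1..r}"

definition q1 :: "nat \<Rightarrow> nat \<times> nat \<Rightarrow> real^3" where
  "q1 K ij = (case ij of (i, j) \<Rightarrow> kvec' K j - kvec K i)"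
definition q2 :: "nat \<Rightarrow> nat \<times> nat \<Rightarrow> real^3" where
  "q2 K ij = (case ij of (i, j) \<Rightarrow> kvec' K j + kvec K i)"

definition E1 :: "real \<Rightarrow> real \<Rightarrow> real \<Rightarrow> real \<Rightarrow> real \<Rightarrow> nat \<Rightarrow> nat \<Rightarrow> real^3 \<Rightarrow> real \<Rightarrow> real^3" where
  "E1 \<beta>1 \<beta>2 \<alpha>2 \<theta>1 \<theta>2 r K x \<tau> =
     sine_series (I1 r) (Ecoef \<beta>1 \<beta>2 \<alpha>2 \<theta>1 \<theta>2 r K \<tau>) (q1 K) x *\<^sub>R vprime"
definition E2 :: "real \<Rightarrow> real \<Rightarrow> real \<Rightarrow> real \<Rightarrow> real \<Rightarrow> nat \<Rightarrow> nat \<Rightarrow> real^3 \<Rightarrow> real \<Rightarrow> real^3" where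
  "E2 \<beta>1 \<beta>2 \<alpha>2 \<theta>1 \<theta>2 r K x \<tau> =
     sine_series (I2 r) (Ecoef \<beta>1 \<beta>2 \<alpha>2 \<theta>1 \<theta>2 r K \<tau>) (q2 K) x *\<^sub>R vprime"

text \<open>b_{1m}(x,t) = int_0^t e^{-(t-tau)(-Delta)^alpha2} E_m(x,tau) dtau, the semigroup
  acting on the sine series defining E_m(.,tau) (vector factor v' is constant).\<close>
definition b11 :: "real \<Rightarrow> real \<Rightarrow> real \<Rightarrow> real \<Rightarrow> real \<Rightarrow> nat \<Rightarrow> nat \<Rightarrow> real^3 \<Rightarrow> real \<Rightarrow> real^3" where
  "b11 \<beta>1 \<beta>2 \<alpha>2 \<theta>1 \<theta>2 r K x t =
     integral {0..t} (\<lambda>\<tau>. frac_heat_sine \<alpha>2 (t - \<tau>) (I1 r)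
        (Ecoef \<beta>1 \<beta>2 \<alpha>2 \<theta>1 \<theta>2 r K \<tau>) (q1 K) x *\<^sub>R vprime)"
definition b12 :: "real \<Rightarrow> real \<Rightarrow> real \<Rightarrow> real \<Rightarrow> real \<Rightarrow> nat \<Rightarrow> nat \<Rightarrow> real^3 \<Rightarrow> real \<Rightarrow> real^3" where
  "b12 \<beta>1 \<beta>2 \<alpha>2 \<theta>1 \<theta>2 r K x t =
     integral {0..t} (\<lambda>\<tau>. frac_heat_sine \<alpha>2 (t - \<tau>) (I2 r)
        (Ecoef \<beta>1 \<beta>2 \<alpha>2 \<theta>1 \<theta>2 r K \<tau>) (q2 K) x *\<^sub>R vprime)"

text \<open>L^infinity norm in x (the functions are continuous, so ess sup = sup).\<close>
definition Linf :: "(real^3 \<Rightarrow> real^3) \<Rightarrow> real" where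
  "Linf f = (SUP x. norm (f x))"

end

theory Submission
  imports Defs
begin

lemma nz: "norm (a *\<^sub>R zeta + b *\<^sub>R eta) = sqrt (a^2 + b^2)"
  by (simp add: norm_eq_sqrt_inner inner_vec_def sum_3 zeta_def eta_def power2_eq_square)
lemma nv: "norm vprime = 1"
  by (simp add: norm_eq_sqrt_inner inner_vec_def sum_3 vprime_def)

lemma nk: "norm (kvec K i) = 2^(i-1) * real K"
  using nz[of "2^(i-1) * real K" 0] by (simp add: kvec_def)
lemma nk': "norm (kvec' K i) = sqrt ((2^(i-1) * real K)^2 + 1)"
  using nz[of "2^(i-1) * real K" 1] by (simp add: kvec_def kvec'_def)
lemma nq1: "norm (q1 K (i,j)) = sqrt ((2^(j-1) * real K - 2^(i-1) * real K)^2 + 1)"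
proof -
  have "q1 K (i,j) = (2^(j-1) * real K - 2^(i-1) * real K) *\<^sub>R zeta + 1 *\<^sub>R eta"
    by (simp add: q1_def kvec_def kvec'_def algebra_simps)
  then show ?thesis using nz[of _ 1] by simp
qed
lemma nq2: "norm (q2 K (i,j)) = sqrt ((2^(j-1) * real K + 2^(i-1) * real K)^2 + 1)"
proof -
  have "q2 K (i,j) = (2^(j-1) * real K + 2^(i-1) * real K) *\<^sub>R zeta + 1 *\<^sub>R eta"
    by (simp add: q2_def kvec_def kvec'_def algebra_simps)
  then show ?thesis using nz[of _ 1] by simp
qed

lemma min_tele_pt:
  fixes z w :: real assumes "z > 0" "w > 1"
  shows "min z (1/z) \<le> 4*w*(1+w)/(w-1) * (w*z/(1+w*z) - z/(1+z))"
proof -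
  have e: "w*z/(1+w*z) - z/(1+z) = (w-1)*z/((1+w*z)*(1+z))"
  proof -
    have "1 + w * z > 0" "1 + z > 0" using assms by (auto intro: add_pos_pos)
    then show ?thesis by (simp add: divide_simps) (simp add: algebra_simps)
  qed
  have pos: "(1+w*z)*(1+z) > 0" using assms by (simp add: add_pos_pos)
  have key: "min z (1/z) * ((1+w*z)*(1+z)) \<le> 4*w*(1+w)*z"
  proof (cases "z \<le> 1")
    case True
    have "(1+w*z)*(1+z) \<le> (1+w)*2" using True assms
      by (intro mult_mono) (auto simp: mult_left_le)
    then have "z * ((1+w*z)*(1+z)) \<le> z*((1+w)*2)" using assms by (intro mult_left_mono) auto
    also have "\<dots> \<le> z*(4*w*(1+w))"
    proof -
      have "(1+w)*2 \<le> (1+w)*(4*w)" using assms by (intro mult_left_mono) auto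
      then show ?thesis using assms by (intro mult_left_mono) (auto simp: mult_ac)
    qed
    moreover have "min z (1/z) = z"
    proof -
      have "z*z \<le> 1" using True assms by (intro mult_le_one) auto
      then have "z \<le> 1/z" using assms by (simp add: pos_le_divide_eq)
      then show ?thesis by simp
    qed
    ultimately show ?thesis by (simp add: mult_ac)
  next
    case False
    have wz: "1*1 \<le> w*z" using False assms by (intro mult_mono) auto
    have "(1+w*z)*(1+z) \<le> (2*w*z)*(2*z)" using False assms wz
      by (intro mult_mono) (auto simp: algebra_simps)
    then have "(1/z) * ((1+w*z)*(1+z)) \<le> (1/z)*((2*w*z)*(2*z))" using assms by (intro mult_left_mono) auto
    also have "\<dots> = 4*w*z" using assms by (simp add: field_simps)
    also have "\<dots> \<le> 4*w*(1+w)*z" using assms by (simp add: algebra_simps)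
    moreover have "min z (1/z) = 1/z"
    proof -
      have "1*1 \<le> z*z" using False assms by (intro mult_mono) auto
      then have "1/z \<le> z" using assms by (simp add: divide_le_eq)
      then show ?thesis by simp
    qed
    ultimately show ?thesis by simp
  qed
  have "min z (1/z) \<le> 4*w*(1+w)*z / ((1+w*z)*(1+z))"
    using key pos by (simp add: pos_le_divide_eq)
  also have "\<dots> = 4*w*(1+w)/(w-1) * (w*z/(1+w*z) - z/(1+z))"
    unfolding e
  proof -
    have g: "\<And>D a::real. D > 0 \<Longrightarrow> a*z/D = a/(w-1) * ((w-1)*z/D)" using assms by simp
    show "4*w*(1+w)*z / ((1+w*z)*(1+z)) = 4*w*(1+w)/(w-1) * ((w-1)*z/((1+w*z)*(1+z)))"
      by (rule g[OF pos])
  qed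
  finally show ?thesis .
qed

lemma min_tele:
  fixes v0 w :: real assumes "v0 > 0" "w > 1"
  shows "(\<Sum>i<n. min (v0*w^i) (1/(v0*w^i))) \<le> 4*w*(1+w)/(w-1)"
proof -
  define F where "F = (\<lambda>i::nat. v0*w^i/(1+v0*w^i))"
  have "(\<Sum>i<n. min (v0*w^i) (1/(v0*w^i))) \<le> (\<Sum>i<n. 4*w*(1+w)/(w-1) * (F (Suc i) - F i))"
  proof (intro sum_mono)
    fix i assume "i \<in> {..<n}"
    have "v0*w^i > 0" using assms by simp
    from min_tele_pt[OF this assms(2)] show "min (v0*w^i) (1/(v0*w^i)) \<le> 4*w*(1+w)/(w-1) * (F (Suc i) - F i)"
      by (simp add: F_def mult_ac)
  qed
  also have "\<dots> = 4*w*(1+w)/(w-1) * (F n - F 0)"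
    by (simp only: sum_distrib_left[symmetric] sum_lessThan_telescope)
  also have "\<dots> \<le> 4*w*(1+w)/(w-1) * 1"
  proof (intro mult_left_mono)
    have "v0*w^n > 0" using assms by simp
    then have "1 + v0*w^n > 0" by simp
    then have "F n \<le> 1" "F 0 \<ge> 0" using assms by (auto simp: F_def divide_le_eq_1)
    then show "F n - F 0 \<le> 1" by linarith
    show "0 \<le> 4*w*(1+w)/(w-1)" using assms by simp
  qed
  finally show ?thesis by simp
qed

lemma Dbound:
  fixes p \<kappa> :: real assumes "p > 0" "\<kappa> > 0"
  shows "\<exists>D. \<forall>u\<ge>1. u powr (2*p) * exp (-\<kappa>*u) \<le> D"
proof -
  define N where "N = nat \<lceil>2*p\<rceil>"
  have N1: "N \<ge> 1" using assms unfolding N_def by linarith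
  have N2: "2*p \<le> real N" using assms by (simp add: N_def)
  show ?thesis
  proof (intro exI allI impI)
    fix u :: real assume u: "u \<ge> 1"
    have "u powr (2*p) \<le> u powr (real N)" using u N2 by (intro powr_mono) auto
    also have "\<dots> = u^N" using u by (simp add: powr_realpow)
    finally have a: "u powr (2*p) \<le> u^N" .
    have "(\<kappa>*u/N) \<le> exp (\<kappa>*u/N)" using exp_ge_add_one_self[of "\<kappa>*u/N"] by linarith
    then have "(\<kappa>*u/N)^N \<le> exp (\<kappa>*u/N)^N" using assms u N1 by (intro power_mono) auto
    also have "\<dots> = exp (\<kappa>*u)" using N1 by (simp add: exp_of_nat_mult[symmetric])
    finally have b: "(\<kappa>/N)^N * u^N \<le> exp (\<kappa>*u)" by (simp add: power_mult_distrib power_divide mult_ac)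
    have kn: "(\<kappa>/N)^N > 0" using assms N1 by simp
    have "u powr (2*p) * exp (-\<kappa>*u) \<le> u^N * exp (-\<kappa>*u)" using a by (intro mult_right_mono) auto
    also have "\<dots> \<le> (exp (\<kappa>*u) / (\<kappa>/N)^N) * exp (-\<kappa>*u)"
      using b kn by (intro mult_right_mono) (auto simp: pos_le_divide_eq mult_ac)
    also have "\<dots> = 1 / (\<kappa>/N)^N" by (simp add: exp_minus field_simps)
    finally show "u powr (2*p) * exp (-\<kappa>*u) \<le> 1 / (\<kappa>/N)^N" .
  qed
qed

lemma shift1: "(\<Sum>i\<in>{1..r}. f i) = (\<Sum>i<r. f (Suc i) :: real)"
  by (induction r) (auto simp: atLeastAtMostSuc_conv)

lemma gbound:
  fixes p \<kappa> D u :: real assumes "p > 0" "\<kappa> > 0" "\<forall>u\<ge>1. u powr (2*p) * exp (-\<kappa>*u) \<le> D" "u > 0"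
  shows "u powr p * exp (-\<kappa>*u) \<le> max 1 D * min (u powr p) (1 / u powr p)"
proof (cases "u \<le> 1")
  case True
  have v1: "u powr p \<le> 1" using True assms by (intro powr_le1) auto
  have m: "u powr p = min (u powr p) (1 / u powr p)"
  proof -
    have "u powr p * u powr p \<le> 1" using v1 assms by (intro mult_le_one) auto
    then have "u powr p \<le> 1 / u powr p" using assms by (simp add: pos_le_divide_eq)
    then show ?thesis by simp
  qed
  have "u powr p * exp (-\<kappa>*u) \<le> u powr p * 1" using assms by (intro mult_left_mono) auto
  also have "\<dots> \<le> max 1 D * u powr p" using mult_right_mono[of 1 "max 1 D" "u powr p"] by simp
  finally have "u powr p * exp (-\<kappa>*u) \<le> max 1 D * u powr p" .
  then show ?thesis using m by simp
next
  case False
  have v1: "u powr p \<ge> 1" using False assms by (intro ge_one_powr_ge_zero) auto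
  have "u powr (2*p) * exp (-\<kappa>*u) \<le> D"
    using assms(3) False by auto
  moreover have "u powr (2*p) = u powr p * u powr p"
    unfolding mult_2 by (rule powr_add)
  ultimately have "u powr p * u powr p * exp (-\<kappa>*u) \<le> D" by simp
  moreover have vp: "u powr p > 0" using v1 by linarith
  ultimately have "u powr p * exp (-\<kappa>*u) \<le> D / u powr p" by (simp add: pos_le_divide_eq mult_ac)
  also have "\<dots> \<le> max 1 D / u powr p" using v1 by (intro divide_right_mono) auto
  also have "\<dots> = max 1 D * min (u powr p) (1 / u powr p)"
  proof -
    have "1*1 \<le> u powr p * u powr p" using v1 by (intro mult_mono) auto
    then have "1 / u powr p \<le> u powr p" using v1 by (simp add: divide_le_eq)
    then have "min (u powr p) (1 / u powr p) = 1 / u powr p" by (simp add: min_absorb2)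
    then show ?thesis by simp
  qed
  finally show ?thesis .
qed

lemma geom_sum:
  fixes \<theta> \<alpha> \<kappa> :: real assumes th: "\<theta> > 0" and al: "\<alpha> > 0" and ka: "\<kappa> > 0"
  shows "\<exists>C>0. \<forall>(K::nat) (r::nat) t. K \<ge> 1 \<longrightarrow> t > 0 \<longrightarrow>
    (\<Sum>i\<in>{1..r}. (2^(i-1)*real K) powr \<theta> * exp (-\<kappa>*(2^(i-1)*real K) powr (2*\<alpha>) * t))
      \<le> C * t powr (-\<theta>/(2*\<alpha>))"
proof -
  define p where "p = \<theta>/(2*\<alpha>)"
  have p: "p > 0" using th al by (simp add: p_def)
  have pa: "2*\<alpha>*p = \<theta>" using al by (simp add: p_def)
  obtain D where D: "\<forall>u\<ge>1. u powr (2*p) * exp (-\<kappa>*u) \<le> D" using Dbound[OF p ka] by blast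
  define E where "E = max 1 D"
  define w where "w = (2::real) powr \<theta>"
  have w1: "w > 1" using th by (simp add: w_def)
  define C where "C = E * (4*w*(1+w)/(w-1))"
  have Cpos: "C > 0" using w1 by (simp add: C_def E_def)
  show ?thesis
  proof (intro exI[of _ C] conjI allI impI Cpos)
    fix K r :: nat and t :: real assume K: "K \<ge> 1" and t: "t > 0"
    define v0 where "v0 = real K powr \<theta> * t powr p"
    have v0: "v0 > 0" using K t by (simp add: v0_def)
    have trm: "(2^i*real K) powr \<theta> * exp (-\<kappa>*(2^i*real K) powr (2*\<alpha>) * t)
        \<le> t powr (-p) * (E * min (v0*w^i) (1/(v0*w^i)))" for i :: nat
    proof -
      define X where "X = 2^i*real K"
      have X: "X > 0" using K by (simp add: X_def)
      define u where "u = X powr (2*\<alpha>) * t"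
      have u: "u > 0" using X t by (simp add: u_def)
      have up: "u powr p = X powr \<theta> * t powr p"
      proof -
        have "u powr p = (X powr (2*\<alpha>)) powr p * t powr p" unfolding u_def
          using X t by (simp only: powr_mult)
        also have "\<dots> = X powr \<theta> * t powr p" by (simp only: powr_powr pa)
        finally show ?thesis .
      qed
      have upv: "u powr p = v0 * w^i"
      proof -
        have "X powr \<theta> = real K powr \<theta> * w^i"
          using K by (simp add: X_def powr_mult w_def powr_realpow[symmetric] powr_powr mult.commute)
        then show ?thesis using up by (simp add: v0_def mult_ac)
      qed
      have "X powr \<theta> * exp (-\<kappa>*X powr (2*\<alpha>) * t) = t powr (-p) * (u powr p * exp (-\<kappa>*u))"
      proof -
        have tt: "t powr (-p) * t powr p = 1" using t by (simp add: powr_minus)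
        have "t powr (-p) * (u powr p * exp (-\<kappa>*u)) = (t powr (-p) * t powr p) * (X powr \<theta> * exp (-\<kappa>*u))"
          by (simp only: up mult_ac)
        also have "\<dots> = X powr \<theta> * exp (-\<kappa>*X powr (2*\<alpha>) * t)" using tt by (simp add: u_def mult_ac)
        finally show ?thesis by simp
      qed
      also have "\<dots> \<le> t powr (-p) * (E * min (u powr p) (1 / u powr p))"
        using gbound[OF p ka D u] by (intro mult_left_mono) (auto simp: E_def)
      finally show ?thesis by (simp add: X_def upv)
    qed
    have "(\<Sum>i\<in>{1..r}. (2^(i-1)*real K) powr \<theta> * exp (-\<kappa>*(2^(i-1)*real K) powr (2*\<alpha>) * t))
       = (\<Sum>i<r. (2^i*real K) powr \<theta> * exp (-\<kappa>*(2^i*real K) powr (2*\<alpha>) * t))"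
      unfolding shift1 by simp
    also have "\<dots> \<le> (\<Sum>i<r. t powr (-p) * (E * min (v0*w^i) (1/(v0*w^i))))"
      by (intro sum_mono trm)
    also have "\<dots> = (t powr (-p) * E) * (\<Sum>i<r. min (v0*w^i) (1/(v0*w^i)))"
      by (simp only: sum_distrib_left mult.assoc)
    also have "\<dots> \<le> (t powr (-p) * E) * (4*w*(1+w)/(w-1))"
      using min_tele[OF v0 w1] by (intro mult_left_mono) (auto simp: E_def)
    also have "\<dots> = C * t powr (-\<theta>/(2*\<alpha>))"
    proof -
      have "-\<theta>/(2*\<alpha>) = -p" by (simp add: p_def)
      then show ?thesis by (simp only: C_def mult_ac)
    qed
    finally show "(\<Sum>i\<in>{1..r}. (2^(i-1)*real K) powr \<theta> * exp (-\<kappa>*(2^(i-1)*real K) powr (2*\<alpha>) * t))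
      \<le> C * t powr (-\<theta>/(2*\<alpha>))" .
  qed
qed

lemma mode_bound:
  fixes x y nq \<alpha> \<theta>1 \<theta>2 \<tau> t :: real
  assumes x: "x \<ge> 1" and y: "y \<ge> 1" and nq: "nq \<ge> max x y / 2" and tau: "0 \<le> \<tau>" "\<tau> \<le> t"
    and al: "\<alpha> > 0" and th: "\<theta>1 > 0" "\<theta>2 > 0"
  shows "exp (-(nq powr (2*\<alpha>)) * (t-\<tau>)) * (x powr \<theta>1 * sqrt (y^2+1) powr \<theta>2
           * exp (-(x powr (2*\<alpha>) + sqrt (y^2+1) powr (2*\<alpha>)) * \<tau>))
         \<le> 2 powr \<theta>2 * (x powr \<theta>1 * exp (-(1/(2 * 2 powr (2*\<alpha>))) * x powr (2*\<alpha>) * t))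
             * (y powr \<theta>2 * exp (-(1/(2 * 2 powr (2*\<alpha>))) * y powr (2*\<alpha>) * t))"
proof -
  define Y where "Y = sqrt (y^2+1)"
  define \<kappa> where "\<kappa> = 1/(2 * 2 powr (2*\<alpha>))"
  define a where "a = x powr (2*\<alpha>)"
  define b where "b = y powr (2*\<alpha>)"
  define M where "M = max x y"
  have Yy: "y \<le> Y" unfolding Y_def by (rule real_le_rsqrt) simp
  have Y2: "Y \<le> 2*y"
  proof -
    have "1*1 \<le> y*y" using y by (intro mult_mono) auto
    then have "y^2+1 \<le> (2*y)^2" by (simp add: power2_eq_square)
    then have "sqrt (y^2+1) \<le> sqrt ((2*y)^2)" by (rule real_sqrt_le_mono)
    moreover have "sqrt ((2*y)^2) = 2*y" using y by (subst real_sqrt_abs) simp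
    ultimately show ?thesis unfolding Y_def by linarith
  qed
  have YP: "Y powr \<theta>2 \<le> 2 powr \<theta>2 * y powr \<theta>2"
  proof -
    have "Y powr \<theta>2 \<le> (2*y) powr \<theta>2" using Y2 Yy y th by (intro powr_mono2) auto
    also have "\<dots> = 2 powr \<theta>2 * y powr \<theta>2" using y by (simp add: powr_mult)
    finally show ?thesis .
  qed
  have p2: "2 powr (2*\<alpha>) \<ge> 1" using al by (intro ge_one_powr_ge_zero) auto
  have k: "\<kappa> > 0" "\<kappa> \<le> 1" using p2 by (auto simp: \<kappa>_def field_simps)
  have ab: "a \<ge> 0" "b \<ge> 0" by (auto simp: a_def b_def)
  have Ma: "M powr (2*\<alpha>) \<ge> a" "M powr (2*\<alpha>) \<ge> b" using x y al
    by (auto simp: a_def b_def M_def intro!: powr_mono2)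
  have Q: "nq powr (2*\<alpha>) \<ge> \<kappa> * (a+b)"
  proof -
    have "\<kappa> * (a+b) \<le> \<kappa> * (2 * M powr (2*\<alpha>))" using Ma k by (intro mult_left_mono) auto
    also have "\<dots> = M powr (2*\<alpha>) / 2 powr (2*\<alpha>)" by (simp add: \<kappa>_def)
    also have "\<dots> = (M/2) powr (2*\<alpha>)" using x by (simp add: M_def powr_divide)
    also have "\<dots> \<le> nq powr (2*\<alpha>)" using nq x al by (intro powr_mono2) (auto simp: M_def)
    finally show ?thesis .
  qed
  have S: "a + Y powr (2*\<alpha>) \<ge> \<kappa> * (a+b)"
  proof -
    have "b \<le> Y powr (2*\<alpha>)" unfolding b_def using Yy y al by (intro powr_mono2) auto
    moreover have "\<kappa> * (a+b) \<le> 1 * (a+b)" using k ab by (intro mult_right_mono) auto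
    ultimately show ?thesis by simp
  qed
  have E: "exp (-(nq powr (2*\<alpha>)) * (t-\<tau>)) * exp (-(a + Y powr (2*\<alpha>)) * \<tau>)
       \<le> exp (-\<kappa>*a*t) * exp (-\<kappa>*b*t)"
  proof -
    have "exp (-(nq powr (2*\<alpha>)) * (t-\<tau>)) * exp (-(a + Y powr (2*\<alpha>)) * \<tau>)
        = exp (-(nq powr (2*\<alpha>) * (t-\<tau>) + (a + Y powr (2*\<alpha>)) * \<tau>))" by (simp add: exp_add[symmetric] algebra_simps)
    also have "\<dots> \<le> exp (-(\<kappa>*(a+b) * (t-\<tau>) + \<kappa>*(a+b) * \<tau>))"
      using Q S tau by (intro exp_le_cancel_iff[THEN iffD2] le_imp_neg_le add_mono mult_right_mono) auto
    also have "\<dots> = exp (-\<kappa>*a*t) * exp (-\<kappa>*b*t)" by (simp add: exp_add[symmetric] algebra_simps)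
    finally show ?thesis .
  qed
  have "exp (-(nq powr (2*\<alpha>)) * (t-\<tau>)) * (x powr \<theta>1 * Y powr \<theta>2 * exp (-(a + Y powr (2*\<alpha>)) * \<tau>))
      = (x powr \<theta>1 * Y powr \<theta>2) * (exp (-(nq powr (2*\<alpha>)) * (t-\<tau>)) * exp (-(a + Y powr (2*\<alpha>)) * \<tau>))"
    by (simp add: mult_ac)
  also have "\<dots> \<le> (x powr \<theta>1 * (2 powr \<theta>2 * y powr \<theta>2)) * (exp (-\<kappa>*a*t) * exp (-\<kappa>*b*t))"
    by (rule mult_mono[OF mult_left_mono[OF YP] E]) auto
  also have "\<dots> = 2 powr \<theta>2 * (x powr \<theta>1 * exp (-\<kappa> * a * t)) * (y powr \<theta>2 * exp (-\<kappa> * b * t))"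
    by (simp add: mult_ac)
  finally show ?thesis by (simp add: Y_def a_def b_def \<kappa>_def)
qed

lemma term_bound:
  fixes \<alpha> \<theta>1 \<theta>2 \<beta>1 \<beta>2 \<tau> t nq s :: real
  assumes K: "K \<ge> 1" and ij: "i \<ge> 1" "j \<ge> 1"
    and nq: "nq \<ge> max (2^(i-1)*real K) (2^(j-1)*real K) / 2"
    and tau: "0 \<le> \<tau>" "\<tau> \<le> t" and al: "\<alpha> > 0" and th: "\<theta>1 > 0" "\<theta>2 > 0"
  shows "\<bar>exp (- (nq powr (2*\<alpha>)) * (t-\<tau>)) * Ecoef \<beta>1 \<beta>2 \<alpha> \<theta>1 \<theta>2 r K \<tau> (i,j) * sin s\<bar>
    \<le> (real r powr (-\<beta>1-\<beta>2)/2) * (2 powr \<theta>2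
      * ((2^(i-1)*real K) powr \<theta>1 * exp (-(1/(2 * 2 powr (2*\<alpha>))) * (2^(i-1)*real K) powr (2*\<alpha>) * t))
      * ((2^(j-1)*real K) powr \<theta>2 * exp (-(1/(2 * 2 powr (2*\<alpha>))) * (2^(j-1)*real K) powr (2*\<alpha>) * t)))"
proof -
  define A where "A = real r powr (-\<beta>1-\<beta>2)/2"
  define x where "x = 2^(i-1)*real K"
  define y where "y = 2^(j-1)*real K"
  have x: "x \<ge> 1" using mult_mono[of 1 "2^(i-1)" 1 "real K"] K by (simp add: x_def)
  have y: "y \<ge> 1" using mult_mono[of 1 "2^(j-1)" 1 "real K"] K by (simp add: y_def)
  define P where "P = exp (- (nq powr (2*\<alpha>)) * (t-\<tau>)) * (x powr \<theta>1 * sqrt (y^2+1) powr \<theta>2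
           * exp (-(x powr (2*\<alpha>) + sqrt (y^2+1) powr (2*\<alpha>)) * \<tau>))"
  have A0: "A \<ge> 0" by (simp add: A_def)
  have P0: "P \<ge> 0" by (simp add: P_def)
  have eq: "exp (- (nq powr (2*\<alpha>)) * (t-\<tau>)) * Ecoef \<beta>1 \<beta>2 \<alpha> \<theta>1 \<theta>2 r K \<tau> (i,j) = - (A * P)"
    by (simp add: Ecoef_def A_def P_def nk nk' x_def y_def mult_ac)
  have "\<bar>exp (- (nq powr (2*\<alpha>)) * (t-\<tau>)) * Ecoef \<beta>1 \<beta>2 \<alpha> \<theta>1 \<theta>2 r K \<tau> (i,j) * sin s\<bar>
      = A * P * \<bar>sin s\<bar>" unfolding eq using A0 P0 by (simp add: abs_mult)
  also have "\<dots> \<le> A * P * 1" using A0 P0 by (intro mult_left_mono) auto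
  also have "\<dots> \<le> A * (2 powr \<theta>2 * (x powr \<theta>1 * exp (-(1/(2 * 2 powr (2*\<alpha>))) * x powr (2*\<alpha>) * t))
             * (y powr \<theta>2 * exp (-(1/(2 * 2 powr (2*\<alpha>))) * y powr (2*\<alpha>) * t)))"
    unfolding mult_1_right P_def
    by (intro mult_left_mono A0 mode_bound x y tau al th) (unfold x_def y_def, rule nq)
  finally show ?thesis by (simp add: A_def x_def y_def)
qed

lemma int_bound:
  fixes f :: "real \<Rightarrow> real^3"
  assumes "\<And>\<tau>. \<tau> \<in> {0..t} \<Longrightarrow> norm (f \<tau>) \<le> B" "0 \<le> B" "0 \<le> t"
  shows "norm (integral {0..t} f) \<le> B * t"
proof (cases "f integrable_on {0..t}")
  case True
  then have "(f has_integral integral {0..t} f) {0..t}" by (simp add: has_integral_integral)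
  from has_integral_bound_real[OF assms(2) finite.emptyI this] assms show ?thesis by simp
next
  case False
  then show ?thesis using assms by (simp add: not_integrable_integral)
qed

lemma heat_bound:
  fixes \<alpha> \<theta>1 \<theta>2 \<beta>1 \<beta>2 \<tau> t :: real and q :: "nat \<times> nat \<Rightarrow> real^3"
  assumes I: "I \<subseteq> {1..r} \<times> {1..r}"
    and qb: "\<And>i j. (i,j) \<in> I \<Longrightarrow> norm (q (i,j)) \<ge> max (2^(i-1)*real K) (2^(j-1)*real K) / 2"
    and K: "K \<ge> 1" and tau: "0 \<le> \<tau>" "\<tau> \<le> t" and al: "\<alpha> > 0" and th: "\<theta>1 > 0" "\<theta>2 > 0"
  shows "\<bar>frac_heat_sine \<alpha> (t-\<tau>) I (Ecoef \<beta>1 \<beta>2 \<alpha> \<theta>1 \<theta>2 r K \<tau>) q x\<bar>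
    \<le> (real r powr (-\<beta>1-\<beta>2)/2) * (2 powr \<theta>2
      * (\<Sum>i\<in>{1..r}. (2^(i-1)*real K) powr \<theta>1 * exp (-(1/(2 * 2 powr (2*\<alpha>))) * (2^(i-1)*real K) powr (2*\<alpha>) * t))
      * (\<Sum>j\<in>{1..r}. (2^(j-1)*real K) powr \<theta>2 * exp (-(1/(2 * 2 powr (2*\<alpha>))) * (2^(j-1)*real K) powr (2*\<alpha>) * t)))"
proof -
  define F1 where "F1 = (\<lambda>i::nat. (2^(i-1)*real K) powr \<theta>1 * exp (-(1/(2 * 2 powr (2*\<alpha>))) * (2^(i-1)*real K) powr (2*\<alpha>) * t))"
  define F2 where "F2 = (\<lambda>i::nat. (2^(i-1)*real K) powr \<theta>2 * exp (-(1/(2 * 2 powr (2*\<alpha>))) * (2^(i-1)*real K) powr (2*\<alpha>) * t))"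
  define A where "A = real r powr (-\<beta>1-\<beta>2)/2"
  define G where "G = (\<lambda>p::nat\<times>nat. A * (2 powr \<theta>2 * F1 (fst p) * F2 (snd p)))"
  have G0: "G p \<ge> 0" for p by (simp add: G_def A_def F1_def F2_def)
  have fin: "finite I" using I by (rule finite_subset) auto
  have "\<bar>frac_heat_sine \<alpha> (t-\<tau>) I (Ecoef \<beta>1 \<beta>2 \<alpha> \<theta>1 \<theta>2 r K \<tau>) q x\<bar>
     \<le> (\<Sum>p\<in>I. \<bar>exp (- (norm (q p) powr (2*\<alpha>)) * (t-\<tau>)) * Ecoef \<beta>1 \<beta>2 \<alpha> \<theta>1 \<theta>2 r K \<tau> p * sin (q p \<bullet> x)\<bar>)"
    unfolding frac_heat_sine_def sine_series_def by (rule sum_abs)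
  also have "\<dots> \<le> (\<Sum>p\<in>I. G p)"
  proof (intro sum_mono)
    fix p assume p: "p \<in> I"
    obtain i j where pij: "p = (i,j)" by (cases p)
    have ij: "i \<ge> 1" "j \<ge> 1" using p I pij by auto
    show "\<bar>exp (- (norm (q p) powr (2*\<alpha>)) * (t-\<tau>)) * Ecoef \<beta>1 \<beta>2 \<alpha> \<theta>1 \<theta>2 r K \<tau> p * sin (q p \<bullet> x)\<bar> \<le> G p"
      unfolding pij G_def A_def F1_def F2_def fst_conv snd_conv
      by (rule term_bound[OF K ij qb[OF p[unfolded pij]] tau al th])
  qed
  also have "\<dots> \<le> (\<Sum>p\<in>{1..r} \<times> {1..r}. G p)"
    by (rule sum_mono2) (use I G0 in auto)
  also have "\<dots> = (\<Sum>i\<in>{1..r}. \<Sum>j\<in>{1..r}. G (i,j))"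
    by (simp add: sum.cartesian_product case_prod_unfold)
  also have "\<dots> = A * (2 powr \<theta>2 * sum F1 {1..r} * sum F2 {1..r})"
    by (simp add: G_def sum_product sum_distrib_left mult_ac)
  finally show ?thesis by (simp add: A_def F1_def F2_def)
qed

lemma pow_lt:
  assumes "1 \<le> i" "i < j"
  shows "2*(2^(i-1)*real K) \<le> 2^(j-1)*real K"
proof -
  have "(2::real)*2^(i-1) = 2^i" using assms(1) by (cases i) auto
  also have "\<dots> \<le> 2^(j-1)" using assms by (intro power_increasing) auto
  finally have "(2::real)*2^(i-1) \<le> 2^(j-1)" .
  then have "(2*2^(i-1))*real K \<le> 2^(j-1)*real K" by (intro mult_right_mono) auto
  then show ?thesis by (simp add: mult_ac)
qed

lemma q1_bound:
  assumes "(i,j) \<in> I1 r"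
  shows "norm (q1 K (i,j)) \<ge> max (2^(i-1)*real K) (2^(j-1)*real K) / 2"
proof -
  have ij: "1 \<le> i" "1 \<le> j" "i \<noteq> j" using assms by (auto simp: I1_def)
  have "\<bar>2^(j-1)*real K - 2^(i-1)*real K\<bar> \<le> norm (q1 K (i,j))"
    unfolding nq1 by (rule real_le_rsqrt) simp
  moreover have "max (2^(i-1)*real K) (2^(j-1)*real K) / 2 \<le> \<bar>2^(j-1)*real K - 2^(i-1)*real K\<bar>"
  proof (cases "i < j")
    case True
    have aux: "\<And>a b::real. 0 \<le> a \<Longrightarrow> 2*a \<le> b \<Longrightarrow> max a b / 2 \<le> \<bar>b - a\<bar>" by (auto simp: max_def)
    from aux[OF _ pow_lt[OF ij(1) True, of K]] show ?thesis by simp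
  next
    case False
    then have ji: "j < i" using ij by auto
    have aux: "\<And>a b::real. 0 \<le> b \<Longrightarrow> 2*b \<le> a \<Longrightarrow> max a b / 2 \<le> \<bar>b - a\<bar>" by (auto simp: max_def)
    from aux[OF _ pow_lt[OF ij(2) ji, of K]] show ?thesis by simp
  qed
  ultimately show ?thesis by linarith
qed

lemma q2_bound:
  shows "norm (q2 K (i,j)) \<ge> max (2^(i-1)*real K) (2^(j-1)*real K) / 2"
proof -
  have "\<bar>2^(j-1)*real K + 2^(i-1)*real K\<bar> \<le> norm (q2 K (i,j))"
    unfolding nq2 by (rule real_le_rsqrt) simp
  moreover have "max (2^(i-1)*real K) (2^(j-1)*real K) / 2 \<le> \<bar>2^(j-1)*real K + 2^(i-1)*real K\<bar>"
    by (auto simp: max_def)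
  ultimately show ?thesis by linarith
qed

theorem lemma4p5:
  fixes \<beta>1 \<beta>2 \<alpha>2 \<theta>1 \<theta>2 :: real
  assumes "\<beta>1 > 0" "\<beta>2 > 0" "\<alpha>2 > 0" "\<theta>1 > 0" "\<theta>2 > 0"
  shows "\<exists>C>0. \<forall>(r::nat) (K::nat) (t::real). r \<ge> 1 \<longrightarrow> K \<ge> 1 \<longrightarrow> t > 0 \<longrightarrow>
           Linf (\<lambda>x. b11 \<beta>1 \<beta>2 \<alpha>2 \<theta>1 \<theta>2 r K x t) + Linf (\<lambda>x. b12 \<beta>1 \<beta>2 \<alpha>2 \<theta>1 \<theta>2 r K x t)
             \<le> C * real r powr (- \<beta>1 - \<beta>2) * t powr (1 - (\<theta>1 + \<theta>2) / (2 * \<alpha>2))"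
proof -
  have al: "\<alpha>2 > 0" and th1: "\<theta>1 > 0" and th2: "\<theta>2 > 0" using assms by auto
  define \<kappa> where "\<kappa> = 1/(2 * 2 powr (2*\<alpha>2))"
  have kp: "\<kappa> > 0" by (simp add: \<kappa>_def)
  obtain C1 where C1: "C1 > 0" and H1: "\<forall>(K::nat) (r::nat) t. K \<ge> 1 \<longrightarrow> t > 0 \<longrightarrow>
    (\<Sum>i\<in>{1..r}. (2^(i-1)*real K) powr \<theta>1 * exp (-\<kappa>*(2^(i-1)*real K) powr (2*\<alpha>2) * t))
      \<le> C1 * t powr (-\<theta>1/(2*\<alpha>2))" using geom_sum[OF th1 al kp] by blast
  obtain C2 where C2: "C2 > 0" and H2: "\<forall>(K::nat) (r::nat) t. K \<ge> 1 \<longrightarrow> t > 0 \<longrightarrow>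
    (\<Sum>i\<in>{1..r}. (2^(i-1)*real K) powr \<theta>2 * exp (-\<kappa>*(2^(i-1)*real K) powr (2*\<alpha>2) * t))
      \<le> C2 * t powr (-\<theta>2/(2*\<alpha>2))" using geom_sum[OF th2 al kp] by blast
  show ?thesis
  proof (intro exI[of _ "2 powr \<theta>2 * C1 * C2"] conjI allI impI)
    show "2 powr \<theta>2 * C1 * C2 > 0" using C1 C2 by simp
    fix r K :: nat and t :: real assume r: "r \<ge> 1" and K: "K \<ge> 1" and t: "t > 0"
    define S1 where "S1 = (\<Sum>i\<in>{1..r}. (2^(i-1)*real K) powr \<theta>1 * exp (-\<kappa>*(2^(i-1)*real K) powr (2*\<alpha>2) * t))"
    define S2 where "S2 = (\<Sum>i\<in>{1..r}. (2^(i-1)*real K) powr \<theta>2 * exp (-\<kappa>*(2^(i-1)*real K) powr (2*\<alpha>2) * t))"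
    define A where "A = real r powr (-\<beta>1-\<beta>2)/2"
    define B where "B = A * (2 powr \<theta>2 * S1 * S2)"
    have S0: "S1 \<ge> 0" "S2 \<ge> 0" by (auto simp: S1_def S2_def intro!: sum_nonneg)
    have A0: "A \<ge> 0" by (simp add: A_def)
    have B0: "B \<ge> 0" using S0 A0 by (simp add: B_def)
    have L1: "Linf (\<lambda>x. b11 \<beta>1 \<beta>2 \<alpha>2 \<theta>1 \<theta>2 r K x t) \<le> B * t"
      unfolding Linf_def
    proof (rule cSUP_least)
      fix x
      show "norm (b11 \<beta>1 \<beta>2 \<alpha>2 \<theta>1 \<theta>2 r K x t) \<le> B * t"
        unfolding b11_def
      proof (rule int_bound[OF _ B0]) 
        fix \<tau> assume tau: "\<tau> \<in> {0..t}"
        have "\<bar>frac_heat_sine \<alpha>2 (t - \<tau>) (I1 r) (Ecoef \<beta>1 \<beta>2 \<alpha>2 \<theta>1 \<theta>2 r K \<tau>) (q1 K) x\<bar> \<le> B"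
          unfolding B_def A_def S1_def S2_def \<kappa>_def
          by (rule heat_bound[OF _ q1_bound K _ _ al th1 th2]) (use tau in \<open>auto simp: I1_def\<close>)
        then show "norm (frac_heat_sine \<alpha>2 (t - \<tau>) (I1 r) (Ecoef \<beta>1 \<beta>2 \<alpha>2 \<theta>1 \<theta>2 r K \<tau>) (q1 K) x *\<^sub>R vprime) \<le> B"
          by (simp add: nv)
      qed (use t in auto)
    qed simp
    have L2: "Linf (\<lambda>x. b12 \<beta>1 \<beta>2 \<alpha>2 \<theta>1 \<theta>2 r K x t) \<le> B * t"
      unfolding Linf_def
    proof (rule cSUP_least)
      fix x
      show "norm (b12 \<beta>1 \<beta>2 \<alpha>2 \<theta>1 \<theta>2 r K x t) \<le> B * t"
        unfolding b12_def
      proof (rule int_bound[OF _ B0]) 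
        fix \<tau> assume tau: "\<tau> \<in> {0..t}"
        have "\<bar>frac_heat_sine \<alpha>2 (t - \<tau>) (I2 r) (Ecoef \<beta>1 \<beta>2 \<alpha>2 \<theta>1 \<theta>2 r K \<tau>) (q2 K) x\<bar> \<le> B"
          unfolding B_def A_def S1_def S2_def \<kappa>_def
          by (rule heat_bound[OF _ q2_bound K _ _ al th1 th2]) (use tau in \<open>auto simp: I2_def\<close>)
        then show "norm (frac_heat_sine \<alpha>2 (t - \<tau>) (I2 r) (Ecoef \<beta>1 \<beta>2 \<alpha>2 \<theta>1 \<theta>2 r K \<tau>) (q2 K) x *\<^sub>R vprime) \<le> B"
          by (simp add: nv)
      qed (use t in auto)
    qed simp
    have s1: "S1 \<le> C1 * t powr (-\<theta>1/(2*\<alpha>2))" using H1 K t by (simp add: S1_def)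
    have s2: "S2 \<le> C2 * t powr (-\<theta>2/(2*\<alpha>2))" using H2 K t by (simp add: S2_def)
    have e: "1 - (\<theta>1 + \<theta>2) / (2 * \<alpha>2) = -\<theta>1/(2*\<alpha>2) + -\<theta>2/(2*\<alpha>2) + 1"
      by (simp add: add_divide_distrib)
    have tp: "t powr (1 - (\<theta>1 + \<theta>2) / (2 * \<alpha>2)) = t powr (-\<theta>1/(2*\<alpha>2)) * t powr (-\<theta>2/(2*\<alpha>2)) * t"
      unfolding e powr_add using t by simp
    have "Linf (\<lambda>x. b11 \<beta>1 \<beta>2 \<alpha>2 \<theta>1 \<theta>2 r K x t) + Linf (\<lambda>x. b12 \<beta>1 \<beta>2 \<alpha>2 \<theta>1 \<theta>2 r K x t)
        \<le> 2 * B * t" using L1 L2 by simp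
    also have "\<dots> = (real r powr (-\<beta>1-\<beta>2) * 2 powr \<theta>2 * t) * (S1 * S2)"
      by (simp add: B_def A_def mult_ac)
    also have "\<dots> \<le> (real r powr (-\<beta>1-\<beta>2) * 2 powr \<theta>2 * t) * ((C1 * t powr (-\<theta>1/(2*\<alpha>2))) * (C2 * t powr (-\<theta>2/(2*\<alpha>2))))"
      using t S0 C1 C2 by (intro mult_left_mono mult_mono s1 s2) auto
    also have "\<dots> = 2 powr \<theta>2 * C1 * C2 * real r powr (- \<beta>1 - \<beta>2) * t powr (1 - (\<theta>1 + \<theta>2) / (2 * \<alpha>2))"
      unfolding tp by (simp add: mult_ac)
    finally show "Linf (\<lambda>x. b11 \<beta>1 \<beta>2 \<alpha>2 \<theta>1 \<theta>2 r K x t) + Linf (\<lambda>x. b12 \<beta>1 \<beta>2 \<alpha>2 \<theta>1 \<theta>2 r K x t)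
      \<le> 2 powr \<theta>2 * C1 * C2 * real r powr (- \<beta>1 - \<beta>2) * t powr (1 - (\<theta>1 + \<theta>2) / (2 * \<alpha>2))" .
  qed
qed

end
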